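(* Let $\mu>0$, $\delta>0$ and $q>0$, and consider the eigenvalue problem on the interval $x\in(\log(q)/\delta,\infty)$: $$-\frac12\,\psi''(x)-\frac{\mu\,e^{-\delta x}}{1-q\,e^{-\delta x}}\,\psi(x)=E\,\psi(x),\qquad \psi(\log(q)/\delta)=\psi(\infty)=0,\qquad \int_{\log(q)/\delta}^\infty|\psi(x)|^2\,dx<\infty .$$ Then the bound-state eigenvalues of this problem are exactly the numbers $$E_n=-\frac12\left(\frac{\mu}{q\,\delta\,(1+n)}-\frac{\delta\,(1+n)}{2}\right)^2$$ for the integers $n$ with $0\le n<-1+\frac1\delta\sqrt{\frac{2\mu}{q}}$ (so that bound states exist only when $0<q<2\mu/\delta^2$), and the eigenfunction belonging to $E_n$ is, up to a normalization constant $N_n$, $$\psi_n(x)=N_n\left(1-q\,e^{-\delta x}\right)e^{-\left(\frac{\mu}{q\,\delta\,(1+n)}-\frac{(n+1)\delta}{2}\right)x}\;{}_2F_1\!\left(-n,\,1+\frac{2\mu}{q\,\delta^2(1+n)};\,\frac{2\mu}{q\,\delta^2(1+n)}-n;\,q\,e^{-\delta x}\right).$$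
   Context: ${}_2F_1(\alpha,\beta;\gamma;z)=\sum_{k\ge0}\frac{(\alpha)_k(\beta)_k}{(\gamma)_k\,k!}z^k$ is the Gauss hypergeometric function, with $(a)_k=a(a+1)\cdots(a+k-1)$ the Pochhammer symbol; for $\alpha=-n$ it is a polynomial of degree $n$ in $z$. *)

theory Defs
  imports "HOL-Analysis.Analysis"
begin

definition hyp2F1 :: "real \<Rightarrow> real \<Rightarrow> real \<Rightarrow> real \<Rightarrow> real" where
  "hyp2F1 a b c z =
     (\<Sum>k. pochhammer a k * pochhammer b k / (pochhammer c k * fact k) * z ^ k)"

definition pot :: "real \<Rightarrow> real \<Rightarrow> real \<Rightarrow> real \<Rightarrow> real" where
  "pot \<mu> \<delta> q x = - (\<mu> * exp (- \<delta> * x) / (1 - q * exp (- \<delta> * x)))"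

definition bound_state :: "real \<Rightarrow> real \<Rightarrow> real \<Rightarrow> real \<Rightarrow> (real \<Rightarrow> complex) \<Rightarrow> bool" where
  "bound_state \<mu> \<delta> q E \<psi> \<longleftrightarrow>
     (let a = ln q / \<delta> in
      (\<exists>\<psi>' \<psi>''. \<forall>x>a.
          (\<psi> has_vector_derivative \<psi>' x) (at x) \<and>
          (\<psi>' has_vector_derivative \<psi>'' x) (at x) \<and>
          - (1/2) * \<psi>'' x + of_real (pot \<mu> \<delta> q x) * \<psi> x = of_real E * \<psi> x) \<and>
      (\<psi> \<longlongrightarrow> 0) (at_right a) \<and>
      (\<psi> \<longlongrightarrow> 0) at_top \<and>
      (\<lambda>x. (cmod (\<psi> x))\<^sup>2) integrable_on {a<..} \<and>
      (\<exists>x>a. \<psi> x \<noteq> 0))"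

definition energy :: "real \<Rightarrow> real \<Rightarrow> real \<Rightarrow> nat \<Rightarrow> real" where
  "energy \<mu> \<delta> q n =
     - (1/2) * (\<mu> / (q * \<delta> * (1 + real n)) - \<delta> * (1 + real n) / 2)\<^sup>2"

definition eigfun :: "real \<Rightarrow> real \<Rightarrow> real \<Rightarrow> nat \<Rightarrow> real \<Rightarrow> real" where
  "eigfun \<mu> \<delta> q n x =
     (1 - q * exp (- \<delta> * x)) *
     exp (- (\<mu> / (q * \<delta> * (1 + real n)) - (real n + 1) * \<delta> / 2) * x) *
     hyp2F1 (- real n) (1 + 2 * \<mu> / (q * \<delta>\<^sup>2 * (1 + real n)))
            (2 * \<mu> / (q * \<delta>\<^sup>2 * (1 + real n)) - real n) (q * exp (- \<delta> * x))"

end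

theory Submission
  imports Defs
begin

definition pc :: "real \<Rightarrow> complex \<Rightarrow> nat \<Rightarrow> complex" where
  "pc lam g j = 1 - of_real lam / ((g + of_nat j) * (of_nat j + 1))"

definition fc :: "real \<Rightarrow> complex \<Rightarrow> nat \<Rightarrow> complex" where
  "fc lam g m = (\<Prod>j<m. pc lam g j)"

lemma fc_0 [simp]: "fc lam g 0 = 1" by (simp add: fc_def)
lemma fc_Suc: "fc lam g (Suc m) = fc lam g m * pc lam g m"
  by (simp add: fc_def)

lemma norm_g_plus: assumes "Re g \<ge> 1" shows "norm (g + of_nat j) \<ge> real j + 1"
proof -
  have "real j + 1 \<le> Re (g + of_nat j)" using assms by simp
  also have "\<dots> \<le> norm (g + of_nat j)" by (rule complex_Re_le_cmod)
  finally show ?thesis .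
qed

lemma g_plus_nz: assumes "Re g \<ge> 1" shows "g + of_nat j \<noteq> 0"
  using norm_g_plus[OF assms, of j] by auto

lemma norm_pc1:
  assumes "Re g \<ge> 1" "lam \<ge> 0"
  shows "norm (pc lam g j - 1) \<le> lam / (real j + 1)^2"
proof -
  have n: "norm (g + of_nat j) \<ge> real j + 1" by (rule norm_g_plus[OF assms(1)])
  have "norm (pc lam g j - 1) = lam / (norm (g + of_nat j) * (real j + 1))"
  proof -
    have e: "cmod (complex_of_nat j + 1) = real j + 1"
      by (metis norm_of_nat of_nat_Suc add.commute of_real_of_nat_eq)
    show ?thesis using assms e by (simp add: pc_def norm_divide norm_mult)
  qed
  also have "\<dots> \<le> lam / ((real j + 1) * (real j + 1))"
    using n assms(2) by (intro divide_left_mono mult_right_mono mult_pos_pos) auto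
  finally show ?thesis by (simp add: power2_eq_square)
qed

lemma summable_inv_sq: "summable (\<lambda>j. lam / (real j + 1)^2)"
proof -
  have "summable (\<lambda>n. inverse (real n ^ 2))" by (rule inverse_power_summable) simp
  then have "summable (\<lambda>n. inverse (real (Suc n) ^ 2))"
    by (subst summable_Suc_iff)
  then have "summable (\<lambda>n. lam * inverse (real (Suc n) ^ 2))" by (rule summable_mult)
  then show ?thesis by (simp add: field_simps)
qed

lemma fc_bound:
  assumes "Re g \<ge> 1" "lam \<ge> 0"
  shows "norm (fc lam g m) \<le> exp (\<Sum>j. lam / (real j + 1)^2)"
proof -
  have "norm (fc lam g m) = (\<Prod>j<m. norm (pc lam g j))" by (simp add: fc_def prod_norm)
  also have "\<dots> \<le> (\<Prod>j<m. exp (lam / (real j + 1)^2))"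
  proof (rule prod_mono)
    fix j assume "j \<in> {..<m}"
    have "norm (pc lam g j) \<le> 1 + norm (pc lam g j - 1)"
      by (metis add.commute diff_add_cancel norm_triangle_ineq norm_one)
    also have "\<dots> \<le> 1 + lam / (real j + 1)^2" using norm_pc1[OF assms] by simp
    also have "\<dots> \<le> exp (lam / (real j + 1)^2)" by (rule exp_ge_add_one_self[simplified add.commute])
    finally show "0 \<le> norm (pc lam g j) \<and> norm (pc lam g j) \<le> exp (lam / (real j + 1)^2)" by simp
  qed
  also have "\<dots> = exp (\<Sum>j<m. lam / (real j + 1)^2)" by (simp add: exp_sum)
  also have "\<dots> \<le> exp (\<Sum>j. lam / (real j + 1)^2)"
    using assms(2) by (intro exp_mono sum_le_suminf summable_inv_sq) auto
  finally show ?thesis .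
qed

lemma fc_bounded:
  assumes "Re g \<ge> 1" "lam \<ge> 0"
  obtains B where "B > 0" "\<And>m. norm (fc lam g m) \<le> B"
  using fc_bound[OF assms] by (metis exp_gt_zero)

lemma fc_summable:
  assumes "Re g \<ge> 1" "lam \<ge> 0" "norm (z::complex) < 1"
  shows "summable (\<lambda>m. fc lam g m * z^m)"
proof -
  obtain B where B: "B > 0" "\<And>m. norm (fc lam g m) \<le> B" using fc_bounded[OF assms(1,2)] by blast
  show ?thesis
  proof (rule summable_comparison_test')
    show "summable (\<lambda>m. B * norm z ^ m)"
      using assms(3) by (intro summable_mult summable_geometric) auto
    fix m
    show "norm (fc lam g m * z ^ m) \<le> B * norm z ^ m"
      using B by (simp add: norm_mult norm_power mult_right_mono)
  qed
qed

definition FF :: "real \<Rightarrow> complex \<Rightarrow> complex \<Rightarrow> complex" where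
  "FF lam g z = (\<Sum>m. fc lam g m * z^m)"
definition F1 :: "real \<Rightarrow> complex \<Rightarrow> complex \<Rightarrow> complex" where
  "F1 lam g z = (\<Sum>m. diffs (fc lam g) m * z^m)"
definition F2 :: "real \<Rightarrow> complex \<Rightarrow> complex \<Rightarrow> complex" where
  "F2 lam g z = (\<Sum>m. diffs (diffs (fc lam g)) m * z^m)"

lemma d1_summable:
  assumes "Re g \<ge> 1" "lam \<ge> 0" "norm (z::complex) < 1"
  shows "summable (\<lambda>m. diffs (fc lam g) m * z^m)"
  by (rule termdiff_converges[where K=1]) (use assms in \<open>auto intro: fc_summable\<close>)

lemma d2_summable:
  assumes "Re g \<ge> 1" "lam \<ge> 0" "norm (z::complex) < 1"
  shows "summable (\<lambda>m. diffs (diffs (fc lam g)) m * z^m)"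
  by (rule termdiff_converges[where K=1]) (use assms in \<open>auto intro: d1_summable\<close>)

lemma FF_deriv:
  assumes "Re g \<ge> 1" "lam \<ge> 0" "norm (z::complex) < 1"
  shows "(FF lam g has_field_derivative F1 lam g z) (at z)"
  unfolding FF_def F1_def using assms
  by (intro termdiffs_strong'[where K=1]) (auto intro: fc_summable)

lemma F1_deriv:
  assumes "Re g \<ge> 1" "lam \<ge> 0" "norm (z::complex) < 1"
  shows "(F1 lam g has_field_derivative F2 lam g z) (at z)"
  unfolding F1_def F2_def using assms
  by (intro termdiffs_strong'[where K=1]) (auto intro: d1_summable)

lemma fc_rec:
  assumes "Re g \<ge> 1"
  shows "fc lam g (Suc m) * ((of_nat m + 1) * (g + of_nat m)) =
         fc lam g m * ((g + of_nat m) * (of_nat m + 1) - of_real lam)"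
proof -
  have nz: "(g + of_nat m) * (of_nat m + 1) \<noteq> 0"
    using g_plus_nz[OF assms, of m] by (metis mult_eq_0_iff of_nat_Suc add.commute of_nat_eq_0_iff nat.distinct(1))
  have "pc lam g m * ((g + of_nat m) * (of_nat m + 1)) = (g + of_nat m) * (of_nat m + 1) - of_real lam"
    using nz by (simp add: pc_def field_simps)
  moreover have "fc lam g (Suc m) * ((of_nat m + 1) * (g + of_nat m)) =
      fc lam g m * (pc lam g m * ((g + of_nat m) * (of_nat m + 1)))"
    by (simp add: fc_Suc mult_ac)
  ultimately show ?thesis by simp
qed

lemma sums_shift_mult:
  fixes z :: complex
  assumes "(\<lambda>m. a m * z^m) sums S"
  shows "(\<lambda>m. (if m = 0 then 0 else a (m - 1)) * z^m) sums (z * S)"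
proof -
  have "(\<lambda>m. z * (a m * z^m)) sums (z * S)" by (rule sums_mult[OF assms])
  then have "(\<lambda>m. (\<lambda>m. (if m = 0 then 0 else a (m - 1)) * z^m) (Suc m)) sums (z * S)"
    by (simp add: algebra_simps)
  then show ?thesis by (subst (asm) sums_Suc_iff) simp
qed

lemma HG_ode:
  assumes g: "Re g \<ge> 1" and l: "lam \<ge> 0" and z: "norm (z::complex) < 1"
  shows "z*(1-z)*F2 lam g z + (g - (g+2)*z)*F1 lam g z - (g - of_real lam)*FF lam g z = 0"
proof -
  define f where "f = fc lam g"
  have s0: "(\<lambda>m. f m * z^m) sums FF lam g z"
    unfolding FF_def f_def using fc_summable[OF g l z] by (rule summable_sums)
  have s1: "(\<lambda>m. diffs f m * z^m) sums F1 lam g z"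
    unfolding F1_def f_def using d1_summable[OF g l z] by (rule summable_sums)
  have s2: "(\<lambda>m. diffs (diffs f) m * z^m) sums F2 lam g z"
    unfolding F2_def f_def using d2_summable[OF g l z] by (rule summable_sums)
  have e1: "(\<lambda>m. of_nat m * f m * z^m) sums (z * F1 lam g z)"
  proof -
    have "(\<lambda>m. (if m = 0 then 0 else diffs f (m - 1)) * z^m) = (\<lambda>m. of_nat m * f m * z^m)"
      by (rule ext) (auto simp: diffs_def not0_implies_Suc)
    then show ?thesis using sums_shift_mult[OF s1] by simp
  qed
  have e2: "(\<lambda>m. (of_nat m + 1) * of_nat m * f (Suc m) * z^m) sums (z * F2 lam g z)"
  proof -
    have "(\<lambda>m. (if m = 0 then 0 else diffs (diffs f) (m - 1)) * z^m) =
          (\<lambda>m. (of_nat m + 1) * of_nat m * f (Suc m) * z^m)"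
      by (rule ext) (auto simp: diffs_def not0_implies_Suc algebra_simps)
    then show ?thesis using sums_shift_mult[OF s2] by simp
  qed
  have e3: "(\<lambda>m. of_nat m * (of_nat m - 1) * f m * z^m) sums (z * (z * F2 lam g z))"
  proof -
    have "(\<lambda>m. (if m = 0 then 0 else (of_nat (m-1) + 1) * of_nat (m-1) * f (Suc (m-1))) * z^m) =
          (\<lambda>m. of_nat m * (of_nat m - 1) * f m * z^m)"
      by (rule ext) (auto simp: not0_implies_Suc algebra_simps of_nat_diff)
    then show ?thesis using sums_shift_mult[OF e2] by simp
  qed
  have e4: "(\<lambda>m. (of_nat m + 1) * f (Suc m) * z^m) sums F1 lam g z"
  proof -
    have "(\<lambda>m. diffs f m * z^m) = (\<lambda>m. (of_nat m + 1) * f (Suc m) * z^m)"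
      by (rule ext) (simp add: diffs_def algebra_simps)
    then show ?thesis using s1 by simp
  qed
  have tot: "(\<lambda>m. ((of_nat m + 1) * of_nat m * f (Suc m) * z^m - of_nat m * (of_nat m - 1) * f m * z^m)
       + g * ((of_nat m + 1) * f (Suc m) * z^m) - (g+2) * (of_nat m * f m * z^m)
       - (g - of_real lam) * (f m * z^m))
     sums ((z * F2 lam g z - z * (z * F2 lam g z)) + g * F1 lam g z - (g+2) * (z * F1 lam g z)
       - (g - of_real lam) * FF lam g z)"
    by (intro sums_diff sums_add sums_mult e1 e2 e3 e4 s0)
  have "\<And>m. ((of_nat m + 1) * of_nat m * f (Suc m) * z^m - of_nat m * (of_nat m - 1) * f m * z^m)
       + g * ((of_nat m + 1) * f (Suc m) * z^m) - (g+2) * (of_nat m * f m * z^m)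
       - (g - of_real lam) * (f m * z^m) = 0"
  proof -
    fix m
    have r: "f (Suc m) * ((of_nat m + 1) * (g + of_nat m)) =
         f m * ((g + of_nat m) * (of_nat m + 1) - of_real lam)"
      unfolding f_def by (rule fc_rec[OF g])
    have "((of_nat m + 1) * of_nat m * f (Suc m) * z^m - of_nat m * (of_nat m - 1) * f m * z^m)
       + g * ((of_nat m + 1) * f (Suc m) * z^m) - (g+2) * (of_nat m * f m * z^m)
       - (g - of_real lam) * (f m * z^m) =
       z^m * (f (Suc m) * ((of_nat m + 1) * (g + of_nat m)) -
         f m * ((g + of_nat m) * (of_nat m + 1) - of_real lam))"
      by (simp add: algebra_simps)
    also have "\<dots> = 0" using r by simp
    finally show "((of_nat m + 1) * of_nat m * f (Suc m) * z^m - of_nat m * (of_nat m - 1) * f m * z^m)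
       + g * ((of_nat m + 1) * f (Suc m) * z^m) - (g+2) * (of_nat m * f m * z^m)
       - (g - of_real lam) * (f m * z^m) = 0" .
  qed
  with tot have "(\<lambda>m. 0::complex) sums ((z * F2 lam g z - z * (z * F2 lam g z)) + g * F1 lam g z - (g+2) * (z * F1 lam g z)
       - (g - of_real lam) * FF lam g z)" by simp
  then have "(z * F2 lam g z - z * (z * F2 lam g z)) + g * F1 lam g z - (g+2) * (z * F1 lam g z)
       - (g - of_real lam) * FF lam g z = 0"
    using sums_unique sums_zero by (metis sums_unique2)
  then show ?thesis by (simp add: algebra_simps)
qed

lemma ode_algebra:
  fixes E Y F F1 F2 k d g L c :: complex
  assumes Y: "Y \<noteq> 1" and hg: "Y*(1-Y)*F2 + (g - (g+2)*Y)*F1 - (g - L)*F = 0"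
    and gd: "d * g = d + 2*k" and cL: "c = d^2 * L"
  shows "E * (k^2 * ((1-Y)*F) + (2*k*d + d^2)*Y*((1-Y)*F1 - F) + d^2*Y^2*((1-Y)*F2 - 2*F1))
       = (k^2 - c*Y/(1-Y)) * (E * ((1-Y)*F))"
proof -
  have kk: "k = (d*g - d)/2" using gd by simp
  have "E * (k^2 * ((1-Y)*F) + (2*k*d + d^2)*Y*((1-Y)*F1 - F) + d^2*Y^2*((1-Y)*F2 - 2*F1))
       - (k^2 - c*Y/(1-Y)) * (E * ((1-Y)*F)) = E*d^2*Y*(Y*(1-Y)*F2 + (g - (g+2)*Y)*F1 - (g - L)*F)"
    unfolding kk cL using Y by (simp add: field_simps power2_eq_square)
  then show ?thesis using hg by simp
qed

locale sol =
  fixes mu d q :: real and k :: complex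
  assumes mu: "mu > 0" and d: "d > 0" and q: "q > 0" and k: "Re k \<ge> 0"
begin

definition "lam = 2*mu/(q*d^2)"
definition "g = 1 + 2*k/of_real d"
definition "a = ln q / d"
definition Yc :: "complex \<Rightarrow> complex" where "Yc z = exp (- of_real d * (z - of_real a))"
definition "Hc w = (1-w) * FF lam g w"
definition "H1 w = (1-w)*F1 lam g w - FF lam g w"
definition "H2 w = (1-w)*F2 lam g w - 2*F1 lam g w"
definition "Uc z = exp(-k*(z - of_real a)) * Hc (Yc z)"
definition "U1 z = exp(-k*(z - of_real a)) * (-k*Hc (Yc z) - of_real d*Yc z*H1 (Yc z))"
definition "U2 z = exp(-k*(z - of_real a)) * (k^2*Hc (Yc z) + (2*k * of_real d + of_real d^2)*Yc z*H1 (Yc z)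
                    + of_real d^2*Yc z^2*H2 (Yc z))"

lemma lam_pos: "lam > 0" using mu d q by (simp add: lam_def)
lemma g_Re: "Re g \<ge> 1" using k d by (simp add: g_def)
lemma gd: "of_real d * g = of_real d + 2*k" using d by (simp add: g_def field_simps)

lemma norm_Yc: "Re z > a \<Longrightarrow> norm (Yc z) < 1"
  using d by (simp add: Yc_def norm_exp_eq_Re mult_pos_pos)

lemma Yc_real: "Yc (of_real x) = of_real (exp (- d * (x - a)))"
  by (simp add: Yc_def exp_of_real[symmetric])

lemma Hc_deriv: "norm w < 1 \<Longrightarrow> (Hc has_field_derivative H1 w) (at w)"
  unfolding Hc_def H1_def
  by (auto intro!: derivative_eq_intros FF_deriv g_Re less_imp_le lam_pos)

lemma H1_deriv: "norm w < 1 \<Longrightarrow> (H1 has_field_derivative H2 w) (at w)"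
  unfolding H1_def H2_def
  by (auto intro!: derivative_eq_intros FF_deriv F1_deriv g_Re less_imp_le lam_pos)

lemma Hc_chain: "norm (f x) < 1 \<Longrightarrow> (f has_field_derivative f') (at x) \<Longrightarrow>
   ((\<lambda>x. Hc (f x)) has_field_derivative (H1 (f x) * f')) (at x)"
  using DERIV_chain2[OF Hc_deriv] by blast

lemma H1_chain: "norm (f x) < 1 \<Longrightarrow> (f has_field_derivative f') (at x) \<Longrightarrow>
   ((\<lambda>x. H1 (f x)) has_field_derivative (H2 (f x) * f')) (at x)"
  using DERIV_chain2[OF H1_deriv] by blast

lemma Yc_deriv: "(Yc has_field_derivative (- of_real d * Yc z)) (at z)"
  unfolding Yc_def by (auto intro!: derivative_eq_intros)

lemma HY_deriv[derivative_intros]: "Re z > a \<Longrightarrow> D = H1 (Yc z) * (- of_real d * Yc z) \<Longrightarrow>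
  ((\<lambda>z. Hc (Yc z)) has_field_derivative D) (at z)"
  using Hc_chain[of Yc z, OF norm_Yc Yc_deriv] by simp

lemma H1Y_deriv[derivative_intros]: "Re z > a \<Longrightarrow> D = H2 (Yc z) * (- of_real d * Yc z) \<Longrightarrow>
  ((\<lambda>z. H1 (Yc z)) has_field_derivative D) (at z)"
  using H1_chain[of Yc z, OF norm_Yc Yc_deriv] by simp

lemma Yc_deriv'[derivative_intros]: "D = - of_real d * Yc z \<Longrightarrow> (Yc has_field_derivative D) (at z)"
  using Yc_deriv by simp

lemma Uc_deriv: "Re z > a \<Longrightarrow> (Uc has_field_derivative U1 z) (at z)"
  unfolding Uc_def U1_def
  by (auto intro!: derivative_eq_intros simp: algebra_simps)

lemma U1_deriv: "Re z > a \<Longrightarrow> (U1 has_field_derivative U2 z) (at z)"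
  unfolding U1_def U2_def
  by (auto intro!: derivative_eq_intros simp: algebra_simps power2_eq_square)

lemma U_ode: "Re z > a \<Longrightarrow> U2 z = (k^2 - of_real (2*mu/q) * Yc z / (1 - Yc z)) * Uc z"
proof -
  assume z: "Re z > a"
  have Y: "Yc z \<noteq> 1" using norm_Yc[OF z] by auto
  have hg: "Yc z*(1-Yc z)*F2 lam g (Yc z) + (g - (g+2)*Yc z)*F1 lam g (Yc z) - (g - of_real lam)*FF lam g (Yc z) = 0"
    by (rule HG_ode[OF g_Re less_imp_le[OF lam_pos] norm_Yc[OF z]])
  have r: "2*mu/q = d^2*lam" using d q by (simp add: lam_def field_simps)
  have cL: "of_real (2*mu/q) = (of_real d)^2 * of_real lam"
    by (simp add: r)
  show ?thesis
    unfolding U2_def Uc_def Hc_def H1_def H2_def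
    by (rule ode_algebra[OF Y hg gd cL])
qed

end

lemma tendsto_zero_bdd:
  fixes f g :: "'a \<Rightarrow> complex"
  assumes "(f \<longlongrightarrow> 0) F" "eventually (\<lambda>x. norm (g x) \<le> B) F"
  shows "((\<lambda>x. f x * g x) \<longlongrightarrow> 0) F"
proof (rule tendsto_0_le[OF assms(1), of _ B])
  show "\<forall>\<^sub>F x in F. norm (f x * g x) \<le> norm (f x) * B"
    using assms(2) by eventually_elim (simp add: norm_mult mult_left_mono)
qed

lemma fc_prod:
  assumes "Re g \<ge> 1" "lam \<ge> 0"
  shows "convergent_prod (pc lam g)" "fc lam g \<longlonglongrightarrow> prodinf (pc lam g)"
proof -
  have "summable (\<lambda>j. norm (pc lam g j - 1))"
    by (rule summable_comparison_test'[OF summable_inv_sq[of lam]]) (use norm_pc1[OF assms] in auto)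
  then have "abs_convergent_prod (pc lam g)" by (rule summable_imp_abs_convergent_prod)
  then show cp: "convergent_prod (pc lam g)" by (rule abs_convergent_prod_imp_convergent_prod)
  have "(\<lambda>n. \<Prod>i\<le>n. pc lam g i) \<longlonglongrightarrow> prodinf (pc lam g)" by (rule convergent_prod_LIMSEQ[OF cp])
  then have "(\<lambda>n. fc lam g (Suc n)) \<longlonglongrightarrow> prodinf (pc lam g)"
    by (simp add: fc_def lessThan_Suc_atMost)
  then show "fc lam g \<longlonglongrightarrow> prodinf (pc lam g)" by (rule LIMSEQ_imp_Suc)
qed

lemma abel_lim:
  fixes f :: "nat \<Rightarrow> complex"
  assumes lim: "f \<longlonglongrightarrow> L"
  shows "((\<lambda>y. (1 - of_real y) * (\<Sum>m. f m * of_real y ^ m)) \<longlongrightarrow> L) (at_left (1::real))"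
proof (rule tendstoI)
  fix e :: real assume e: "e > 0"
  from lim have "\<forall>\<^sub>F m in sequentially. dist (f m) L < e/2" using e by (intro tendstoD) auto
  then obtain N where N: "\<And>m. m \<ge> N \<Longrightarrow> norm (f m - L) < e/2"
    by (auto simp: eventually_sequentially dist_norm)
  define C where "C = (\<Sum>m<N. norm (f m - L))"
  have C: "C \<ge> 0" unfolding C_def by (intro sum_nonneg) auto
  have bnd: "norm (f m - L) \<le> e/2 + (if m < N then C else 0)" for m
  proof (cases "m < N")
    case True
    then have "norm (f m - L) \<le> C" unfolding C_def
      by (intro member_le_sum) auto
    then show ?thesis using True e by simp
  next
    case False then show ?thesis using N[of m] by simp
  qed
  define d where "d = min (1/2) (e / (2 * (real N * C + 1)))"
  have NC: "real N * C \<ge> 0" using C by simp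
  have d: "d > 0" using e NC unfolding d_def by (auto intro!: divide_pos_pos)
  have "\<forall>\<^sub>F y in at_left (1::real). y \<in> {1 - d<..<1}"
    by (rule eventually_at_left_real) (use d in simp)
  then show "\<forall>\<^sub>F y in at_left (1::real). dist ((1 - of_real y) * (\<Sum>m. f m * of_real y ^ m)) L < e"
  proof eventually_elim
    case (elim y)
    then have y: "y > 0" "y < 1" "1 - y < d" using d by (auto simp: d_def)
    have ny: "norm (complex_of_real y) < 1" using y by simp
    have sg: "summable (\<lambda>m. y ^ m)" using y by (intro summable_geometric) simp
    have sgc: "summable (\<lambda>m. (of_real y :: complex) ^ m)" using ny by (rule summable_geometric)
    have Bf: "norm (f m) \<le> norm L + e/2 + C" for m
      using bnd[of m] C by (smt (verit) norm_triangle_ineq2)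
    have sfd: "summable (\<lambda>m. (f m - L) * of_real y ^ m)"
    proof (rule summable_comparison_test'[of "\<lambda>m. (e/2 + C) * y ^ m"])
      show "summable (\<lambda>m. (e/2 + C) * y ^ m)" by (rule summable_mult[OF sg])
      fix m show "norm ((f m - L) * complex_of_real y ^ m) \<le> (e/2 + C) * y ^ m"
        using bnd[of m] y C by (auto simp: norm_mult norm_power intro!: mult_right_mono split: if_splits)
    qed
    have sf: "summable (\<lambda>m. f m * of_real y ^ m)"
    proof -
      have "summable (\<lambda>m. (f m - L) * of_real y ^ m + L * of_real y ^ m)"
        by (intro summable_add sfd summable_mult sgc)
      then show ?thesis by (simp add: algebra_simps)
    qed
    have geo: "(\<Sum>m. (of_real y :: complex) ^ m) = 1 / (1 - of_real y)"
      by (rule suminf_geometric[OF ny])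
    have "(\<Sum>m. f m * of_real y ^ m) = (\<Sum>m. (f m - L) * of_real y ^ m) + L * (\<Sum>m. of_real y ^ m)"
      using suminf_add[OF sfd summable_mult[OF sgc, of L]] suminf_mult[OF sgc, of L]
      by (simp add: algebra_simps)
    then have eq: "(1 - of_real y) * (\<Sum>m. f m * of_real y ^ m) - L
        = (1 - of_real y) * (\<Sum>m. (f m - L) * of_real y ^ m)"
      using y by (simp add: geo field_simps)
    have sb: "summable (\<lambda>m. e/2 * y^m + (if m < N then C else 0))"
      by (intro summable_add summable_mult sg) (rule summable_finite[of "{..<N}"], auto)
    have "norm (\<Sum>m. (f m - L) * of_real y ^ m) \<le> (\<Sum>m. e/2 * y^m + (if m < N then C else 0))"
    proof (rule norm_suminf_le[OF _ sb])
      fix m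
      have "norm ((f m - L) * of_real y ^ m) \<le> (e/2 + (if m < N then C else 0)) * y^m"
        using bnd[of m] y by (auto simp: norm_mult norm_power intro!: mult_right_mono)
      also have "\<dots> \<le> e/2 * y^m + (if m < N then C else 0)"
        using y C by (auto simp: algebra_simps power_le_one intro: mult_left_le)
      finally show "norm ((f m - L) * of_real y ^ m) \<le> e/2 * y^m + (if m < N then C else 0)" .
    qed
    also have "\<dots> = e/2 * (1/(1-y)) + real N * C"
    proof -
      have "(\<Sum>m. e/2 * y^m + (if m < N then C else 0)) = (\<Sum>m. e/2 * y^m) + (\<Sum>m. (if m < N then C else 0))"
        by (rule suminf_add[symmetric], rule summable_mult[OF sg], rule summable_finite[of "{..<N}"], auto)
      also have "(\<Sum>m. e/2 * y^m) = e/2 * (1/(1-y))"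
      proof -
        have "norm y < 1" using y by simp
        then show ?thesis using suminf_mult[OF sg, of "e/2"] suminf_geometric[of y] by simp
      qed
      also have "(\<Sum>m. (if m < N then C else 0)) = real N * C"
        by (subst suminf_finite[of "{..<N}"]) auto
      finally show ?thesis .
    qed
    finally have nb: "norm (\<Sum>m. (f m - L) * of_real y ^ m) \<le> e/2 * (1/(1-y)) + real N * C" .
    have "dist ((1 - of_real y) * (\<Sum>m. f m * of_real y ^ m)) L
        = (1 - y) * norm (\<Sum>m. (f m - L) * of_real y ^ m)"
      using y by (simp add: dist_norm eq norm_mult)
        (metis abs_of_pos diff_gt_0_iff_gt norm_of_real of_real_1 of_real_diff)
    also have "\<dots> \<le> (1 - y) * (e/2 * (1/(1-y)) + real N * C)"
      using y nb by (intro mult_left_mono) auto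
    also have "\<dots> = e/2 + (1-y) * (real N * C)" using y by (simp add: field_simps)
    also have "\<dots> < e"
    proof -
      have "(1-y) * (real N * C) \<le> d * (real N * C)" using y C by (intro mult_right_mono) auto
      also have "\<dots> \<le> e / (2 * (real N * C + 1)) * (real N * C)"
        using C by (intro mult_right_mono) (auto simp: d_def)
      also have "\<dots> = e/2 * ((real N * C) / (real N * C + 1))" by simp
      also have "\<dots> < e/2 * 1"
        using NC e by (intro mult_strict_left_mono) auto
      also have "\<dots> = e/2" by simp
      finally show ?thesis by simp
    qed
    finally show ?case .
  qed
qed

lemma vec_mvt:
  fixes f f' :: "real \<Rightarrow> complex"
  assumes ab: "a \<le> b" and der: "\<And>t. t \<in> {a..b} \<Longrightarrow> (f has_vector_derivative f' t) (at t)"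
    and bd: "\<And>t. t \<in> {a..b} \<Longrightarrow> norm (f' t) \<le> B"
  shows "norm (f b - f a) \<le> B * (b - a)"
proof -
  have "norm (f b - f a) \<le> B * norm (b - a)"
  proof (rule differentiable_bound[of "{a..b}" f "\<lambda>t h. h *\<^sub>R f' t"])
    show "convex {a..b}" by simp
    fix t assume t: "t \<in> {a..b}"
    show "(f has_derivative (\<lambda>h. h *\<^sub>R f' t)) (at t within {a..b})"
      using der[OF t] by (simp add: has_vector_derivative_def has_derivative_at_withinI)
    have "onorm (\<lambda>h::real. h *\<^sub>R f' t) = onorm (\<lambda>h::real. h) * norm (f' t)"
      by (rule onorm_scaleR_left) simp
    also have "\<dots> = norm (f' t)" by (simp add: onorm_id)
    finally show "onorm (\<lambda>h. h *\<^sub>R f' t) \<le> B" using bd[OF t] by simp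
  qed (use ab in auto)
  then show ?thesis using ab by simp
qed

lemma Re_deriv:
  fixes f :: "real \<Rightarrow> complex"
  shows "(f has_vector_derivative f') (at t) \<Longrightarrow> ((\<lambda>t. Re (f t)) has_real_derivative Re f') (at t)"
  unfolding has_real_derivative_iff_has_vector_derivative
  by (drule bounded_linear.has_vector_derivative[OF bounded_linear_Re]) simp

lemma Im_deriv:
  fixes f :: "real \<Rightarrow> complex"
  shows "(f has_vector_derivative f') (at t) \<Longrightarrow> ((\<lambda>t. Im (f t)) has_real_derivative Im f') (at t)"
  unfolding has_real_derivative_iff_has_vector_derivative
  by (drule bounded_linear.has_vector_derivative[OF bounded_linear_Im]) simp

lemma deriv_tendsto_zero:
  fixes p p1 p2 :: "real \<Rightarrow> complex"
  assumes d1: "\<And>x. x \<ge> b \<Longrightarrow> (p has_vector_derivative p1 x) (at x)"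
    and d2: "\<And>x. x \<ge> b \<Longrightarrow> (p1 has_vector_derivative p2 x) (at x)"
    and M: "\<And>x. x \<ge> b \<Longrightarrow> norm (p2 x) \<le> M"
    and lim: "(p \<longlongrightarrow> 0) at_top"
  shows "(p1 \<longlongrightarrow> 0) at_top"
proof -
  define M' where "M' = max M 0"
  have M': "M' \<ge> 0" "\<And>x. x \<ge> b \<Longrightarrow> norm (p2 x) \<le> M'" using M by (auto simp: M'_def le_max_iff_disj)
  have key: "norm (p1 x) \<le> (norm (p (x+h)) + norm (p x)) / h + M' * h" if x: "x \<ge> b" and h: "h > 0" for x h
  proof -
    have "norm ((p (x+h) - (x+h) *\<^sub>R p1 x) - (p x - x *\<^sub>R p1 x)) \<le> (M' * h) * ((x+h) - x)"
    proof (rule vec_mvt)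
      fix t assume t: "t \<in> {x..x+h}"
      show "((\<lambda>t. p t - t *\<^sub>R p1 x) has_vector_derivative (p1 t - p1 x)) (at t)"
        using t x by (auto intro!: derivative_eq_intros d1)
      have "norm (p1 t - p1 x) \<le> M' * (t - x)"
        by (rule vec_mvt[where f'=p2]) (use t x M' d2 in auto)
      also have "\<dots> \<le> M' * h" using t M' by (intro mult_left_mono) auto
      finally show "norm (p1 t - p1 x) \<le> M' * h" .
    qed (use h in auto)
    then have "norm (p (x+h) - p x - h *\<^sub>R p1 x) \<le> M' * h * h"
      by (simp add: algebra_simps)
    then have "norm (h *\<^sub>R p1 x) \<le> norm (p (x+h)) + norm (p x) + M' * h * h"
    proof -
      have "norm (h *\<^sub>R p1 x) \<le> norm (p (x+h) - p x) + norm (p (x+h) - p x - h *\<^sub>R p1 x)"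
        using norm_triangle_ineq4[of "p (x+h) - p x" "p (x+h) - p x - h *\<^sub>R p1 x"] by simp
      moreover have "norm (p (x+h) - p x) \<le> norm (p (x+h)) + norm (p x)" by (rule norm_triangle_ineq4)
      ultimately show ?thesis using \<open>norm (p (x+h) - p x - h *\<^sub>R p1 x) \<le> M' * h * h\<close> by linarith
    qed
    then have "h * norm (p1 x) \<le> norm (p (x+h)) + norm (p x) + M' * h * h"
      using h by simp
    then show ?thesis using h by (simp add: field_simps)
  qed
  show ?thesis
  proof (rule tendstoI)
    fix e :: real assume e: "e > 0"
    define h where "h = e / (2 * (M' + 1))"
    have h: "h > 0" using e M' by (simp add: h_def)
    have Mh: "M' * h < e / 2"
    proof -
      have "M' * h = e/2 * (M' / (M' + 1))" using M' by (simp add: h_def field_simps)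
      also have "\<dots> < e/2 * 1" using M' e by (intro mult_strict_left_mono) auto
      finally show ?thesis by simp
    qed
    have ev: "\<forall>\<^sub>F x in at_top. norm (p x) < e * h / 4"
      using tendstoD[OF lim, of "e * h / 4"] e h by (simp add: dist_norm)
    then obtain X where X: "\<And>x. x \<ge> X \<Longrightarrow> norm (p x) < e * h / 4"
      by (auto simp: eventually_at_top_linorder)
    show "\<forall>\<^sub>F x in at_top. dist (p1 x) 0 < e"
      unfolding eventually_at_top_linorder
    proof (intro exI[of _ "max X b"] allI impI)
      fix x assume x: "x \<ge> max X b"
      have "norm (p1 x) \<le> (norm (p (x+h)) + norm (p x)) / h + M' * h"
        using key[of x h] x h by auto
      also have "(norm (p (x+h)) + norm (p x)) / h \<le> (e * h / 4 + e * h / 4) / h"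
        using X[of x] X[of "x+h"] x h by (intro divide_right_mono) auto
      also have "\<dots> = e / 2" using h by (simp add: field_simps)
      finally show "dist (p1 x) 0 < e" using Mh by simp
    qed
  qed
qed

lemma wronskian_const:
  fixes p p1 p2 u u1 u2 G :: "real \<Rightarrow> complex"
  assumes dp: "\<And>x. x > a \<Longrightarrow> (p has_vector_derivative p1 x) (at x)"
    and dp1: "\<And>x. x > a \<Longrightarrow> (p1 has_vector_derivative p2 x) (at x)"
    and du: "\<And>x. x > a \<Longrightarrow> (u has_vector_derivative u1 x) (at x)"
    and du1: "\<And>x. x > a \<Longrightarrow> (u1 has_vector_derivative u2 x) (at x)"
    and ep: "\<And>x. x > a \<Longrightarrow> p2 x = G x * p x"
    and eu: "\<And>x. x > a \<Longrightarrow> u2 x = G x * u x"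
  obtains C where "\<And>x. x > a \<Longrightarrow> p x * u1 x - p1 x * u x = C"
proof -
  have der: "\<And>x. x \<in> {a<..} \<Longrightarrow> ((\<lambda>x. p x * u1 x - p1 x * u x) has_vector_derivative 0) (at x within {a<..})"
  proof -
    fix x assume x: "x \<in> {a<..}"
    then have x': "x > a" by simp
    have "((\<lambda>x. p x * u1 x - p1 x * u x) has_vector_derivative
        (p x * u2 x + p1 x * u1 x - (p1 x * u1 x + p2 x * u x))) (at x)"
      by (rule has_vector_derivative_diff[OF has_vector_derivative_mult[OF dp[OF x'] du1[OF x']]
            has_vector_derivative_mult[OF dp1[OF x'] du[OF x']]])
    moreover have "p x * u2 x + p1 x * u1 x - (p1 x * u1 x + p2 x * u x) = 0"
      using ep[OF x'] eu[OF x'] by (simp add: algebra_simps)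
    ultimately show "((\<lambda>x. p x * u1 x - p1 x * u x) has_vector_derivative 0) (at x within {a<..})"
      by (simp add: has_vector_derivative_at_within)
  qed
  then obtain C where "\<And>x. x \<in> {a<..} \<Longrightarrow> p x * u1 x - p1 x * u x = C"
  proof -
    have cv: "convex {a<..}" by simp
    show ?thesis using has_vector_derivative_zero_constant[OF cv der] that by blast
  qed
  then show ?thesis using that by auto
qed

lemma Re_deriv'[derivative_intros]:
  fixes f :: "real \<Rightarrow> complex"
  shows "(f has_vector_derivative f') (at t) \<Longrightarrow> D = Re f' \<Longrightarrow> ((\<lambda>t. Re (f t)) has_real_derivative D) (at t)"
  using Re_deriv by blast

lemma Im_deriv'[derivative_intros]:
  fixes f :: "real \<Rightarrow> complex"
  shows "(f has_vector_derivative f') (at t) \<Longrightarrow> D = Im f' \<Longrightarrow> ((\<lambda>t. Im (f t)) has_real_derivative D) (at t)"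
  using Im_deriv by blast

lemma inner_bound: "\<bar>Re x * Re y + Im x * Im y\<bar> \<le> cmod x * cmod y"
  using Cauchy_Schwarz_ineq2[of x y] by (simp add: inner_complex_def)

lemma abs_comb: "\<bar>A\<bar> \<le> P \<Longrightarrow> \<bar>B\<bar> \<le> Q \<Longrightarrow> \<bar>2*A + 2*B\<bar> \<le> 2*P + 2*(Q::real)"
  by arith

lemma ode_unique:
  fixes w w1 w2 G :: "real \<Rightarrow> complex"
  assumes dw: "\<And>x. x > a \<Longrightarrow> (w has_vector_derivative w1 x) (at x)"
   and dw1: "\<And>x. x > a \<Longrightarrow> (w1 has_vector_derivative w2 x) (at x)"
   and ew: "\<And>x. x > a \<Longrightarrow> w2 x = G x * w x"
   and cG: "continuous_on {a<..} G"
   and x0: "x0 > a" "w x0 = 0" "w1 x0 = 0"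
   and x: "x > a"
  shows "w x = 0"
proof -
  define lo where "lo = min x x0"
  define hi where "hi = max x x0"
  have sub: "{lo..hi} \<subseteq> {a<..}" using x x0 by (auto simp: lo_def hi_def)
  have "compact (G ` {lo..hi})"
    by (rule compact_continuous_image[OF continuous_on_subset[OF cG sub]]) simp
  then obtain K0 where K0: "K0 > 0" "\<And>t. t \<in> {lo..hi} \<Longrightarrow> norm (G t) \<le> K0"
    using compact_imp_bounded bounded_pos by (metis imageI)
  define K where "K = 1 + K0"
  define e where "e t = (Re (w t))^2 + (Im (w t))^2 + (Re (w1 t))^2 + (Im (w1 t))^2" for t
  define e' where "e' t = 2 * (Re (w t) * Re (w1 t) + Im (w t) * Im (w1 t))
        + 2 * (Re (w1 t) * Re (w2 t) + Im (w1 t) * Im (w2 t))" for t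
  have de: "(e has_real_derivative e' t) (at t)" if "t > a" for t
    unfolding e_def e'_def
    by (auto intro!: derivative_eq_intros dw[OF that] dw1[OF that] simp: algebra_simps)
  have e_eq: "e t = (cmod (w t))^2 + (cmod (w1 t))^2" for t
    by (simp add: e_def cmod_power2)
  have e_nonneg: "e t \<ge> 0" for t by (simp add: e_def)
  have bnd: "\<bar>e' t\<bar> \<le> K * e t" if t: "t \<in> {lo..hi}" for t
  proof -
    have ta: "t > a" using sub t by auto
    have a1: "\<bar>Re (w t) * Re (w1 t) + Im (w t) * Im (w1 t)\<bar> \<le> cmod (w t) * cmod (w1 t)"
      by (rule inner_bound)
    have "\<bar>Re (w1 t) * Re (w2 t) + Im (w1 t) * Im (w2 t)\<bar> \<le> cmod (w1 t) * cmod (w2 t)"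
      by (rule inner_bound)
    moreover have "cmod (w2 t) \<le> K0 * cmod (w t)"
      using ew[OF ta] K0(2)[OF t] by (simp add: norm_mult mult_right_mono)
    then have "cmod (w1 t) * cmod (w2 t) \<le> cmod (w1 t) * (K0 * cmod (w t))"
      by (intro mult_left_mono) auto
    moreover have "cmod (w1 t) * (K0 * cmod (w t)) = K0 * (cmod (w t) * cmod (w1 t))"
      by (simp add: algebra_simps)
    ultimately have a2: "\<bar>Re (w1 t) * Re (w2 t) + Im (w1 t) * Im (w2 t)\<bar> \<le> K0 * (cmod (w t) * cmod (w1 t))"
      by linarith
    have "\<bar>e' t\<bar> \<le> 2 * (cmod (w t) * cmod (w1 t)) + 2 * (K0 * (cmod (w t) * cmod (w1 t)))"
      unfolding e'_def by (rule abs_comb[OF a1 a2])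
    also have "\<dots> = K * (2 * (cmod (w t) * cmod (w1 t)))" by (simp add: K_def algebra_simps)
    also have "\<dots> \<le> K * e t"
    proof -
      have "2 * (cmod (w t) * cmod (w1 t)) \<le> (cmod (w t))^2 + (cmod (w1 t))^2"
        using sum_squares_bound[of "cmod (w t)" "cmod (w1 t)"] by (simp add: algebra_simps)
      then show ?thesis using K0 unfolding e_eq K_def by (intro mult_left_mono) auto
    qed
    finally show ?thesis .
  qed
  have ex0: "e x0 = 0" using x0 by (simp add: e_def)
  have "e x \<le> 0"
  proof (cases "x0 \<le> x")
    case True
    define h where "h t = e t * exp (- K * t)" for t
    have "h x \<le> h x0"
    proof (rule DERIV_nonpos_imp_nonincreasing[OF True])
      fix t assume t: "x0 \<le> t" "t \<le> x"
      have tI: "t \<in> {lo..hi}" using t by (auto simp: lo_def hi_def)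
      have ta: "t > a" using t x0 by auto
      have "(h has_real_derivative (e' t * exp (- K * t) + e t * (- K * exp (- K * t)))) (at t)"
        unfolding h_def by (auto intro!: derivative_eq_intros de[OF ta])
      moreover have "e' t * exp (- K * t) + e t * (- K * exp (- K * t)) \<le> 0"
      proof -
        have "e' t \<le> K * e t" using bnd[OF tI] by linarith
        then have "e' t * exp (- K * t) \<le> K * e t * exp (- K * t)" by (intro mult_right_mono) auto
        then show ?thesis by (simp add: algebra_simps)
      qed
      ultimately show "\<exists>y. (h has_real_derivative y) (at t) \<and> y \<le> 0" by blast
    qed
    then have "e x * exp (- K * x) \<le> 0" by (simp add: h_def ex0)
    then show ?thesis by (simp add: mult_le_0_iff)
  next
    case False
    then have xx: "x \<le> x0" by simp
    define h where "h t = e t * exp (K * t)" for t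
    have "h x \<le> h x0"
    proof (rule DERIV_nonneg_imp_nondecreasing[OF xx])
      fix t assume t: "x \<le> t" "t \<le> x0"
      have tI: "t \<in> {lo..hi}" using t by (auto simp: lo_def hi_def)
      have ta: "t > a" using t x by auto
      have "(h has_real_derivative (e' t * exp (K * t) + e t * (K * exp (K * t)))) (at t)"
        unfolding h_def by (auto intro!: derivative_eq_intros de[OF ta])
      moreover have "e' t * exp (K * t) + e t * (K * exp (K * t)) \<ge> 0"
      proof -
        have "- e' t \<le> K * e t" using bnd[OF tI] by linarith
        then have "- e' t * exp (K * t) \<le> K * e t * exp (K * t)" by (intro mult_right_mono) auto
        then show ?thesis by (simp add: algebra_simps)
      qed
      ultimately show "\<exists>y. (h has_real_derivative y) (at t) \<and> y \<ge> 0" by blast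
    qed
    then have "e x * exp (K * x) \<le> 0" by (simp add: h_def ex0)
    then show ?thesis by (simp add: mult_le_0_iff)
  qed
  then have "e x = 0" using e_nonneg[of x] by linarith
  then have "(cmod (w x))^2 = 0" unfolding e_eq
    using zero_le_power2[of "cmod (w x)"] zero_le_power2[of "cmod (w1 x)"] by linarith
  then show ?thesis by simp
qed

lemma exp_neg_top: assumes "d > (0::real)" shows "((\<lambda>x. exp (- d * x)) \<longlongrightarrow> 0) at_top"
proof -
  have "filterlim (\<lambda>x. d*x) at_top at_top"
    by (rule filterlim_tendsto_pos_mult_at_top[OF tendsto_const assms filterlim_ident])
  then have "filterlim (\<lambda>x. exp (d*x)) at_top at_top" by (rule filterlim_compose[OF exp_at_top])
  then have "((\<lambda>x. inverse (exp (d*x))) \<longlongrightarrow> 0) at_top" by (rule tendsto_inverse_0_at_top)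
  then show ?thesis by (simp add: exp_minus)
qed

context sol begin

definition "ur x = Uc (of_real x)"
definition "ur1 x = U1 (of_real x)"
definition "ur2 x = U2 (of_real x)"

lemma ur_deriv: "x > a \<Longrightarrow> (ur has_vector_derivative ur1 x) (at x)"
  unfolding ur_def ur1_def by (rule has_vector_derivative_real_field) (rule Uc_deriv, simp)

lemma ur1_deriv: "x > a \<Longrightarrow> (ur1 has_vector_derivative ur2 x) (at x)"
  unfolding ur1_def ur2_def by (rule has_vector_derivative_real_field) (rule U1_deriv, simp)

lemma qa: "exp (d * a) = q" using d q by (simp add: a_def)

lemma Yc_real': "Yc (of_real x) = of_real (q * exp (- d * x))"
proof -
  have "exp (- d * (x - a)) = exp (- d * x) * exp (d * a)"
    by (simp add: algebra_simps flip: exp_add)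
  then show ?thesis by (simp add: Yc_real qa mult.commute)
qed

lemma qe_lt1: "x > a \<Longrightarrow> q * exp (- d * x) < 1"
proof -
  assume x: "x > a"
  have "norm (Yc (of_real x)) < 1" by (rule norm_Yc) (use x in simp)
  then show ?thesis using q by (simp add: Yc_real' norm_mult)
qed

lemma ur_ode:
  assumes kE: "k^2 = of_real (-2*E)" and x: "x > a"
  shows "ur2 x = of_real (2 * (pot mu d q x - E)) * ur x"
proof -
  have lt: "q * exp (- d * x) < 1" by (rule qe_lt1[OF x])
  have r: "2 * (pot mu d q x - E) = -2*E - (2*mu/q) * (q * exp (- d * x)) / (1 - q * exp (- d * x))"
    using lt q by (simp add: pot_def field_simps)
  have "k^2 - of_real (2*mu/q) * Yc (of_real x) / (1 - Yc (of_real x)) = of_real (2 * (pot mu d q x - E))"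
    unfolding r Yc_real' kE by simp
  then show ?thesis unfolding ur2_def ur_def using U_ode[of "of_real x"] x by simp
qed

lemma Hc_0: "Hc 0 = 1" by (simp add: Hc_def FF_def powser_zero)

lemma Hc_cont: "isCont Hc 0" using Hc_deriv[of 0] by (intro DERIV_isCont) auto
lemma H1_cont: "isCont H1 0" using H1_deriv[of 0] by (intro DERIV_isCont) auto

lemma Y_top: "((\<lambda>x. Yc (of_real x)) \<longlongrightarrow> 0) at_top"
proof -
  have "((\<lambda>x. q * exp (- d * x)) \<longlongrightarrow> q * 0) at_top" by (intro tendsto_mult tendsto_const exp_neg_top d)
  then have "((\<lambda>x. complex_of_real (q * exp (- d * x))) \<longlongrightarrow> of_real 0) at_top" by (intro tendsto_of_real) simp
  then show ?thesis by (simp add: Yc_real')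
qed

lemma HcY_top: "((\<lambda>x. Hc (Yc (of_real x))) \<longlongrightarrow> 1) at_top"
  using isCont_tendsto_compose[OF Hc_cont Y_top] by (simp add: Hc_0)

lemma br_top: "((\<lambda>x. -k*Hc (Yc (of_real x)) - of_real d*Yc (of_real x)*H1 (Yc (of_real x))) \<longlongrightarrow> -k) at_top"
proof -
  have "((\<lambda>x. -k*Hc (Yc (of_real x)) - of_real d*Yc (of_real x)*H1 (Yc (of_real x))) \<longlongrightarrow> -k*1 - of_real d*0*H1 0) at_top"
    by (intro tendsto_intros HcY_top Y_top isCont_tendsto_compose[OF H1_cont Y_top])
  then show ?thesis by simp
qed

lemma norm_expk: "x \<ge> a \<Longrightarrow> norm (exp (-k*(of_real x - of_real a))) \<le> 1"
  using k by (simp add: norm_exp_eq_Re mult_nonneg_nonneg)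

lemma ev_bdd:
  assumes "(f \<longlongrightarrow> (l::complex)) F" shows "\<forall>\<^sub>F x in F. norm (f x) \<le> norm l + 1"
proof -
  have "\<forall>\<^sub>F x in F. dist (f x) l < 1" using tendstoD[OF assms] by simp
  then show ?thesis
    by eventually_elim (smt (verit, best) dist_norm norm_triangle_ineq2)
qed

lemma ev_ge_a: "\<forall>\<^sub>F x in at_top. x \<ge> a" by (rule eventually_ge_at_top)

lemma ur_bdd: "\<forall>\<^sub>F x in at_top. norm (ur x) \<le> 2"
  using ev_bdd[OF HcY_top] ev_ge_a
proof eventually_elim
  case (elim x)
  have "norm (ur x) = norm (exp (-k*(of_real x - of_real a))) * norm (Hc (Yc (of_real x)))"
    by (simp add: ur_def Uc_def norm_mult)
  also have "\<dots> \<le> 1 * 2" using elim norm_expk[of x] by (intro mult_mono) auto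
  finally show ?case by simp
qed

lemma ur1_bdd: "\<forall>\<^sub>F x in at_top. norm (ur1 x) \<le> norm k + 1"
  using ev_bdd[OF br_top] ev_ge_a
proof eventually_elim
  case (elim x)
  have "norm (ur1 x) = norm (exp (-k*(of_real x - of_real a))) *
     norm (-k*Hc (Yc (of_real x)) - of_real d*Yc (of_real x)*H1 (Yc (of_real x)))"
    by (simp add: ur1_def U1_def norm_mult)
  also have "\<dots> \<le> 1 * (norm k + 1)" using elim norm_expk[of x] by (intro mult_mono) auto
  finally show ?case by simp
qed

lemma ur_nz: "\<forall>\<^sub>F x in at_top. ur x \<noteq> 0"
proof -
  have "\<forall>\<^sub>F x in at_top. dist (Hc (Yc (of_real x))) 1 < 1" using tendstoD[OF HcY_top] by simp
  then show ?thesis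
    by eventually_elim (auto simp: ur_def Uc_def)
qed

lemma ur_norm_imag: assumes "Re k = 0" shows "((\<lambda>x. norm (ur x)) \<longlongrightarrow> 1) at_top"
proof -
  have "\<And>x. norm (ur x) = norm (Hc (Yc (of_real x)))"
    using assms by (simp add: ur_def Uc_def norm_mult norm_exp_eq_Re)
  then show ?thesis using tendsto_norm[OF HcY_top] by simp
qed

lemma ur_lim_pos: assumes "Re k > 0" shows "(ur \<longlongrightarrow> 0) at_top"
proof -
  have "((\<lambda>x. exp (- Re k * x)) \<longlongrightarrow> 0) at_top" by (rule exp_neg_top[OF assms])
  then have "((\<lambda>x. exp (- Re k * x) * exp (Re k * a)) \<longlongrightarrow> 0 * exp (Re k * a)) at_top"
    by (intro tendsto_mult tendsto_const)
  moreover have "\<And>x. exp (- Re k * x) * exp (Re k * a) = norm (exp (-k*(of_real x - of_real a)))"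
    by (simp add: norm_exp_eq_Re algebra_simps flip: exp_add)
  ultimately have "((\<lambda>x. norm (exp (-k*(of_real x - of_real a)))) \<longlongrightarrow> 0) at_top" by simp
  then have "((\<lambda>x. exp (-k*(of_real x - of_real a))) \<longlongrightarrow> 0) at_top"
    by (rule tendsto_norm_zero_cancel)
  then have "((\<lambda>x. exp (-k*(of_real x - of_real a)) * Hc (Yc (of_real x))) \<longlongrightarrow> 0) at_top"
    by (rule tendsto_zero_bdd[OF _ ev_bdd[OF HcY_top]])
  moreover have "ur = (\<lambda>x. exp (-k*(of_real x - of_real a)) * Hc (Yc (of_real x)))"
    by (rule ext) (simp add: ur_def Uc_def)
  ultimately show ?thesis by simp
qed

lemma ur_at_a:
  assumes "fc lam g \<longlonglongrightarrow> L"
  shows "(ur \<longlongrightarrow> L) (at_right a)"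
proof -
  have c1: "((\<lambda>x. exp (- d * (x - a))) \<longlongrightarrow> exp (- d * (a - a))) (at_right a)"
    by (intro tendsto_intros)
  have ev: "\<forall>\<^sub>F x in at_right a. exp (- d * (x - a)) < 1"
    using d by (auto simp: eventually_at_right_less intro!: eventually_mono[OF eventually_at_right_less[of a]] mult_pos_pos)
  have fl: "filterlim (\<lambda>x. exp (- d * (x - a))) (at_left 1) (at_right a)"
    by (rule tendsto_imp_filterlim_at_left) (use c1 ev in simp_all)
  have A: "((\<lambda>x. Hc (of_real (exp (- d * (x - a))))) \<longlongrightarrow> L) (at_right a)"
    using filterlim_compose[OF abel_lim[OF assms] fl] by (simp add: Hc_def FF_def)
  have B: "((\<lambda>x. exp (-k*(of_real x - of_real a))) \<longlongrightarrow> exp (-k*(of_real a - of_real a))) (at_right a)"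
    by (intro tendsto_intros)
  have "((\<lambda>x. exp (-k*(of_real x - of_real a)) * Hc (of_real (exp (- d * (x - a))))) \<longlongrightarrow> 1 * L) (at_right a)"
    using tendsto_mult[OF B A] by simp
  moreover have "ur = (\<lambda>x. exp (-k*(of_real x - of_real a)) * Hc (of_real (exp (- d * (x - a)))))"
    by (rule ext) (simp add: ur_def Uc_def Yc_real)
  ultimately show ?thesis by simp
qed

end

lemma fc_tail: "pc lam g n = 0 \<Longrightarrow> m > n \<Longrightarrow> fc lam g m = 0"
  unfolding fc_def by (rule prod_zero) auto

lemma fc_lim0: "pc lam g n = 0 \<Longrightarrow> fc lam g \<longlonglongrightarrow> 0"
proof -
  assume h: "pc lam g n = 0"
  have "\<forall>\<^sub>F m in sequentially. fc lam g m = 0"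
    unfolding eventually_sequentially by (intro exI[of _ "Suc n"]) (auto intro: fc_tail[OF h])
  then show ?thesis by (rule tendsto_eventually)
qed

lemma coef_real:
  fixes lam t gr :: real
  assumes "lam = t * (1 + real n)" "gr = t - real n" "gr > 0"
  shows "1 - lam / ((gr + real m) * (real m + 1)) = (- real n + real m) * (1 + t + real m) / ((gr + real m) * (real m + 1))"
proof -
  have nz: "(gr + real m) * (real m + 1) \<noteq> 0" using assms(3) by (simp add: add_pos_nonneg)
  show ?thesis using nz unfolding assms(1,2) by (simp add: field_simps)
qed

lemma fc_hyp_coef:
  fixes lam t gr :: real
  assumes "lam = t * (1 + real n)" "gr = t - real n" "gr > 0"
  shows "fc lam (of_real gr) m = of_real (pochhammer (- real n) m * pochhammer (1+t) m / (pochhammer gr m * fact m))"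
proof (induction m)
  case 0 then show ?case by simp
next
  case (Suc m)
  have pgr: "pochhammer gr m \<noteq> 0" using assms(3) by (simp add: pochhammer_eq_0_iff)
  have nz: "(gr + real m) * (real m + 1) \<noteq> 0" using assms(3) by (simp add: add_pos_nonneg)
  have "pc lam (of_real gr) m = of_real (1 - lam / ((gr + real m) * (real m + 1)))"
    by (simp add: pc_def)
  also have "\<dots> = of_real ((- real n + real m) * (1 + t + real m) / ((gr + real m) * (real m + 1)))"
    by (subst coef_real[OF assms]) simp
  finally have pcm: "pc lam (of_real gr) m = of_real ((- real n + real m) * (1 + t + real m) / ((gr + real m) * (real m + 1)))" .
  show ?case
    unfolding fc_Suc Suc.IH pcm of_real_mult[symmetric]
    using pgr nz by (simp add: pochhammer_Suc field_simps)
qed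

lemma FF_hyp:
  fixes lam t gr y :: real
  assumes "lam = t * (1 + real n)" "gr = t - real n" "gr > 0"
  shows "FF lam (of_real gr) (of_real y) = of_real (hyp2F1 (- real n) (1+t) gr y)"
proof -
  define r where "r m = pochhammer (- real n) m * pochhammer (1+t) m / (pochhammer gr m * fact m) * y^m" for m
  have r0: "r m = 0" if "m \<notin> {..n}" for m
  proof -
    have "pochhammer (- real n) m = 0" using that pochhammer_of_nat_eq_0_iff[of n m] by auto
    then show ?thesis by (simp add: r_def)
  qed
  have "FF lam (of_real gr) (of_real y) = (\<Sum>m. of_real (r m))"
    unfolding FF_def r_def fc_hyp_coef[OF assms] by simp
  also have "\<dots> = (\<Sum>m\<le>n. of_real (r m))" by (rule suminf_finite) (auto simp: r0)
  also have "\<dots> = of_real (\<Sum>m\<le>n. r m)" by simp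
  also have "(\<Sum>m\<le>n. r m) = (\<Sum>m. r m)" by (rule suminf_finite[symmetric]) (auto simp: r0)
  also have "\<dots> = hyp2F1 (- real n) (1+t) gr y" by (simp add: hyp2F1_def r_def)
  finally show ?thesis .
qed

lemma integrable_exp_bound:
  fixes f :: "real \<Rightarrow> complex"
  assumes cf: "continuous_on {a<..} f" and s: "s > 0"
    and bd: "\<And>x. x > a \<Longrightarrow> norm (f x) \<le> C * exp (- s * x)"
  shows "(\<lambda>x. (cmod (f x))\<^sup>2) integrable_on {a<..}"
proof (rule measurable_bounded_by_integrable_imp_integrable)
  show "{a<..} \<in> sets lebesgue" by simp
  show "(\<lambda>x. (cmod (f x))\<^sup>2) \<in> borel_measurable (lebesgue_on {a<..})"
    by (rule continuous_imp_measurable_on_sets_lebesgue) (auto intro!: continuous_intros cf)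
  have "(\<lambda>x. exp (- (2 * s) * x)) integrable_on {a..}"
    by (rule integrable_on_exp_minus_to_infinity) (use s in simp)
  then have "(\<lambda>x. of_real (C^2) * exp (- (2 * s) * x)) integrable_on {a..}"
    by (rule integrable_on_cmult_left)
  moreover have "negligible (sym_diff {a..} {a<..})"
  proof -
    have "sym_diff {a..} {a<..} = {a}" by auto
    then show ?thesis by simp
  qed
  ultimately show "(\<lambda>x. C^2 * exp (- (2 * s) * x)) integrable_on {a<..}"
    using integrable_spike_set_eq by fastforce
  fix x assume "x \<in> {a<..}"
  then have x: "x > a" by simp
  have "norm ((cmod (f x))\<^sup>2) = (cmod (f x))\<^sup>2" by simp
  also have "\<dots> \<le> (C * exp (- s * x))\<^sup>2"
    using bd[OF x] by (intro power_mono) auto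
  also have "\<dots> = C^2 * exp (- (2 * s) * x)"
    by (simp add: power_mult_distrib power2_eq_square flip: exp_add)
  finally show "norm ((cmod (f x))\<^sup>2) \<le> C^2 * exp (- (2 * s) * x)" .
qed

context sol begin

lemma pot_cont: "continuous_on {a<..} (\<lambda>x. complex_of_real (2 * (pot mu d q x - E)))"
proof -
  have "\<And>x. x \<in> {a<..} \<Longrightarrow> 1 - q * exp (- d * x) \<noteq> 0" using qe_lt1 by fastforce
  then have "continuous_on {a<..} (\<lambda>x. 2 * (pot mu d q x - E))"
    unfolding pot_def by (auto intro!: continuous_intros)
  then show ?thesis by (rule continuous_on_of_real)
qed

lemma pot_lim: "((\<lambda>x. complex_of_real (2 * (pot mu d q x - E))) \<longlongrightarrow> of_real (2 * (0 - E))) at_top"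
proof -
  have "((\<lambda>x. 2 * (- (mu * exp (- d * x) / (1 - q * exp (- d * x))) - E)) \<longlongrightarrow> 2 * (- (mu * 0 / (1 - q * 0)) - E)) at_top"
    by (intro tendsto_intros exp_neg_top d) auto
  then show ?thesis unfolding pot_def by (intro tendsto_of_real) simp
qed

end

lemma aux1: "d > 0 \<Longrightarrow> q > 0 \<Longrightarrow> (N::real) > 0 \<Longrightarrow> d/2 * ((2*mu/(q*d^2))/N) = mu/(q*d*N)"
  by (simp add: field_simps power2_eq_square)

lemma aux2: "d > 0 \<Longrightarrow> q > 0 \<Longrightarrow> (N::real) > 0 \<Longrightarrow>
   2 * (mu / (q * d * N) - N * d / 2) / d = 2 * mu / (q * d\<^sup>2 * N) - N"
  by (simp add: field_simps power2_eq_square)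

lemma aux3: "d > 0 \<Longrightarrow> q > 0 \<Longrightarrow> (N::real) > 0 \<Longrightarrow>
   2 * mu / (q * d\<^sup>2) = 2 * mu / (q * d\<^sup>2 * N) * N"
  by (simp add: field_simps power2_eq_square)

context sol begin

lemma pc_zero_s:
  assumes ks: "k = of_real s" and pz: "pc lam g n = 0"
  shows "s = mu / (q * d * (1 + real n)) - (real n + 1) * d / 2"
proof -
  have gs: "g = of_real (1 + 2 * s / d)"
  proof -
    have "g = 1 + 2 * k / of_real d" by (simp add: g_def)
    also have "\<dots> = of_real (1 + 2 * s / d)" using d by (simp add: ks)
    finally show ?thesis .
  qed
  have nz: "(g + of_nat n) * (of_nat n + 1) \<noteq> 0"
    using g_plus_nz[OF g_Re, of n] by (metis mult_eq_0_iff of_nat_Suc add.commute of_nat_eq_0_iff nat.distinct(1))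
  from pz have "of_real lam = (g + of_nat n) * (of_nat n + 1)"
    using nz by (simp add: pc_def field_simps)
  then have "complex_of_real lam = of_real ((1 + 2 * s / d + real n) * (real n + 1))"
    unfolding gs by simp
  then have r: "lam = (1 + 2 * s / d + real n) * (real n + 1)" by (simp only: of_real_eq_iff)
  have n1: "1 + real n > 0" by simp
  have "2 * s / d = lam/(real n+1) - (real n + 1)" using r d n1 by (simp add: field_simps)
  then have "s = d/2 * (lam/(real n+1)) - (real n+1)*d/2" using d by (simp add: field_simps)
  moreover have "d/2 * (lam/(real n+1)) = mu/(q*d*(1+real n))"
    using aux1[OF d q, of "real n + 1" mu] unfolding lam_def by (simp add: add.commute)
  ultimately show ?thesis by simp
qed

lemma FF_finite_bound:
  assumes pz: "pc lam g n = 0" and y: "0 \<le> y" "y \<le> 1"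
  shows "norm (FF lam g (of_real y)) \<le> (\<Sum>m\<le>n. norm (fc lam g m))"
proof -
  have "FF lam g (of_real y) = (\<Sum>m\<le>n. fc lam g m * of_real y ^ m)"
    unfolding FF_def by (rule suminf_finite) (auto intro: fc_tail[OF pz])
  also have "norm \<dots> \<le> (\<Sum>m\<le>n. norm (fc lam g m * of_real y ^ m))" by (rule norm_sum)
  also have "\<dots> \<le> (\<Sum>m\<le>n. norm (fc lam g m))"
  proof (rule sum_mono)
    fix m
    have "norm (complex_of_real y ^ m) \<le> 1" using y by (simp add: norm_power power_le_one)
    then show "norm (fc lam g m * of_real y ^ m) \<le> norm (fc lam g m)"
      by (simp add: norm_mult mult_left_le)
  qed
  finally show ?thesis .
qed

lemma ur_bound:
  assumes ks: "k = of_real s" and pz: "pc lam g n = 0" and x: "x > a"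
  shows "norm (ur x) \<le> (exp (s * a) * (\<Sum>m\<le>n. norm (fc lam g m))) * exp (- s * x)"
proof -
  define y where "y = exp (- d * (x - a))"
  have y: "0 \<le> y" "y \<le> 1" using x d by (auto simp: y_def mult_nonneg_nonneg)
  have n1: "norm (exp (-k*(of_real x - of_real a))) = exp (- s * (x - a))"
    by (simp add: ks norm_exp_eq_Re flip: of_real_diff)
  have "norm (ur x) = norm (exp (-k*(of_real x - of_real a))) * (norm (1 - complex_of_real y) * norm (FF lam g (of_real y)))"
    by (simp add: ur_def Uc_def Hc_def Yc_real y_def norm_mult)
  also have "\<dots> = exp (- s * (x - a)) * (norm (1 - complex_of_real y) * norm (FF lam g (of_real y)))"
    by (simp only: n1)
  also have "\<dots> \<le> exp (- s * (x - a)) * (1 * (\<Sum>m\<le>n. norm (fc lam g m)))"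
  proof (intro mult_left_mono mult_mono FF_finite_bound[OF pz y])
    show "norm (1 - complex_of_real y) \<le> 1"
    proof -
      have "1 - complex_of_real y = of_real (1 - y)" by simp
      then have "norm (1 - complex_of_real y) = \<bar>1 - y\<bar>" by (simp only: norm_of_real)
      then show ?thesis using y by simp
    qed
  qed auto
  also have "\<dots> = (exp (s * a) * (\<Sum>m\<le>n. norm (fc lam g m))) * exp (- s * x)"
    by (simp add: algebra_simps flip: exp_add)
  finally show ?thesis .
qed

lemma ur_eig:
  assumes ks: "k = of_real s" and pz: "pc lam g n = 0" and x: "x > a"
  shows "ur x = exp (k * of_real a) * of_real (eigfun mu d q n x)"
proof -
  have s: "s = mu / (q * d * (1 + real n)) - (real n + 1) * d / 2" by (rule pc_zero_s[OF ks pz])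
  define t where "t = 2 * mu / (q * d\<^sup>2 * (1 + real n))"
  define gr where "gr = 1 + 2 * s / d"
  have gs: "g = of_real gr"
  proof -
    have "g = 1 + 2 * k / of_real d" by (simp add: g_def)
    also have "\<dots> = of_real gr" using d by (simp add: ks gr_def)
    finally show ?thesis .
  qed
  have n1: "1 + real n > 0" by simp
  have lt: "lam = t * (1 + real n)" using aux3[OF d q n1, of mu] unfolding lam_def t_def .
  have gt: "gr = t - real n"
  proof -
    have "2 * s / d = t - (real n + 1)"
      unfolding s t_def using aux2[OF d q, of "real n + 1" mu] by (simp add: add.commute)
    then show ?thesis unfolding gr_def by simp
  qed
  have grp: "gr > 0"
  proof -
    have "Re g \<ge> 1" by (rule g_Re)
    then show ?thesis using gs by simp
  qed
  have ff: "FF lam g (of_real y) = of_real (hyp2F1 (- real n) (1 + t) (t - real n) y)" for y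
    unfolding gs using FF_hyp[OF lt gt grp, of y] gt by simp
  have e1: "exp (- k * (of_real x - of_real a)) = exp (k * of_real a) * exp (- k * of_real x)"
    by (simp add: algebra_simps flip: exp_add)
  have "exp (- k * of_real x) = exp (of_real (- s * x))" by (simp add: ks)
  also have "\<dots> = of_real (exp (- s * x))" by (rule exp_of_real)
  finally have e: "exp (- k * (of_real x - of_real a)) = exp (k * of_real a) * of_real (exp (- s * x))"
    using e1 by simp
  have "ur x = exp (- k * (of_real x - of_real a)) * ((1 - of_real (q * exp (- d * x))) *
      of_real (hyp2F1 (- real n) (1 + t) (t - real n) (q * exp (- d * x))))"
    unfolding ur_def Uc_def Hc_def Yc_real' ff by (rule refl)
  also have "\<dots> = exp (k * of_real a) * of_real (eigfun mu d q n x)"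
    unfolding e eigfun_def s t_def by (simp add: algebra_simps)
  finally show ?thesis .
qed

end

lemma aux4:
  fixes d q mu N :: real
  assumes "d > 0" "q > 0" "N > 0" "mu/(q*d*N) - N*d/2 > 0"
  shows "(d*N)^2 < 2*mu/q"
proof -
  have "N*d/2 < mu/(q*d*N)" using assms(4) by simp
  then have "N*d/2 * (q*d*N) < mu" using assms(1-3) by (simp add: field_simps)
  then show ?thesis using assms(1-3) by (simp add: field_simps power2_eq_square)
qed

lemma aux5:
  fixes d q mu N :: real
  assumes "d > 0" "q > 0" "N > 0" "(d*N)^2 < 2*mu/q"
  shows "mu/(q*d*N) - N*d/2 > 0"
proof -
  have "(d*N)^2 * q < 2*mu" using assms by (simp add: field_simps)
  then have "N*d/2 * (q*d*N) < mu" by (simp add: power2_eq_square algebra_simps)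
  then have "N*d/2 < mu/(q*d*N)" using assms(1-3) by (simp add: field_simps)
  then show ?thesis by simp
qed

lemma forward:
  fixes \<mu> \<delta> q E :: real and \<psi> :: "real \<Rightarrow> complex"
  assumes mu: "\<mu> > 0" and d: "\<delta> > 0" and q: "q > 0" and bs: "bound_state \<mu> \<delta> q E \<psi>"
  shows "\<exists>n::nat. \<exists>c::complex.
        real n < -1 + (1/\<delta>) * sqrt (2 * \<mu> / q) \<and>
        E = energy \<mu> \<delta> q n \<and> c \<noteq> 0 \<and>
        (\<forall>x > ln q / \<delta>. \<psi> x = c * of_real (eigfun \<mu> \<delta> q n x))"
proof -
  define a where "a = ln q / \<delta>"
  from bs obtain p1 p2 where
    dd: "\<forall>x>a. (\<psi> has_vector_derivative p1 x) (at x) \<and> (p1 has_vector_derivative p2 x) (at x) \<and>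
          - (1/2) * p2 x + of_real (pot \<mu> \<delta> q x) * \<psi> x = of_real E * \<psi> x"
    and la: "(\<psi> \<longlongrightarrow> 0) (at_right a)" and lt: "(\<psi> \<longlongrightarrow> 0) at_top"
    and nz: "\<exists>x>a. \<psi> x \<noteq> 0"
    unfolding bound_state_def Let_def a_def by blast
  have der: "\<And>x. x > a \<Longrightarrow> (\<psi> has_vector_derivative p1 x) (at x)" using dd by blast
  have der1: "\<And>x. x > a \<Longrightarrow> (p1 has_vector_derivative p2 x) (at x)" using dd by blast
  define G where "G x = complex_of_real (2 * (pot \<mu> \<delta> q x - E))" for x
  have ep: "p2 x = G x * \<psi> x" if x: "x > a" for x
  proof -
    have e: "- (1/2) * p2 x + of_real (pot \<mu> \<delta> q x) * \<psi> x - of_real E * \<psi> x = 0" using dd x by simp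
    have "p2 x = 2 * (of_real (pot \<mu> \<delta> q x) * \<psi> x - of_real E * \<psi> x)
        + (-2) * (- (1/2) * p2 x + of_real (pot \<mu> \<delta> q x) * \<psi> x - of_real E * \<psi> x)"
      by (simp add: algebra_simps)
    also have "\<dots> = G x * \<psi> x" unfolding e by (simp add: G_def algebra_simps)
    finally show ?thesis .
  qed
  define k where "k = (if E < 0 then complex_of_real (sqrt (-2*E)) else \<i> * complex_of_real (sqrt (2*E)))"
  have kRe: "Re k \<ge> 0" by (simp add: k_def)
  have kE: "k^2 = complex_of_real (-2*E)"
  proof (cases "E < 0")
    case True
    then have kk: "k = complex_of_real (sqrt (-2*E))" by (simp add: k_def)
    have "(sqrt (-2*E))^2 = -2*E" using True by simp
    then have "complex_of_real ((sqrt (-2*E))^2) = complex_of_real (-2*E)" by (simp only:)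
    then show ?thesis unfolding kk of_real_power .
  next
    case False
    then have kk: "k = \<i> * complex_of_real (sqrt (2*E))" by (simp add: k_def)
    have "(sqrt (2*E))^2 = 2*E" using False by simp
    then have r: "complex_of_real ((sqrt (2*E))^2) = complex_of_real (2*E)" by (simp only:)
    have "k^2 = \<i>^2 * complex_of_real ((sqrt (2*E))^2)" unfolding kk of_real_power by (rule power_mult_distrib)
    then show ?thesis unfolding r by simp
  qed
  interpret S: sol \<mu> \<delta> q k using mu d q kRe by unfold_locales auto
  have Sa: "S.a = a" by (simp add: S.a_def a_def)
  have urd: "\<And>x. x > a \<Longrightarrow> (S.ur has_vector_derivative S.ur1 x) (at x)" using S.ur_deriv Sa by simp
  have ur1d: "\<And>x. x > a \<Longrightarrow> (S.ur1 has_vector_derivative S.ur2 x) (at x)" using S.ur1_deriv Sa by simp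
  have ure: "\<And>x. x > a \<Longrightarrow> S.ur2 x = G x * S.ur x" using S.ur_ode[OF kE] Sa by (simp add: G_def)
  have ev1: "\<forall>\<^sub>F x in at_top. norm (\<psi> x) \<le> 1" using S.ev_bdd[OF lt] by simp
  define M where "M = norm (complex_of_real (2*(0-E))) + 1"
  have ev2: "\<forall>\<^sub>F x in at_top. norm (G x) \<le> M" using S.ev_bdd[OF S.pot_lim[of E]] unfolding G_def M_def .
  have ev3: "\<forall>\<^sub>F x in at_top. x > a" by (rule eventually_gt_at_top)
  obtain b where b: "\<And>x. x \<ge> b \<Longrightarrow> norm (\<psi> x) \<le> 1 \<and> norm (G x) \<le> M \<and> x > a"
    using eventually_conj[OF ev1 eventually_conj[OF ev2 ev3]] unfolding eventually_at_top_linorder by blast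
  have h1: "\<And>x. x \<ge> b \<Longrightarrow> (\<psi> has_vector_derivative p1 x) (at x)" using b der by blast
  have h2: "\<And>x. x \<ge> b \<Longrightarrow> (p1 has_vector_derivative p2 x) (at x)" using b der1 by blast
  have h3: "norm (p2 x) \<le> M" if x: "x \<ge> b" for x
  proof -
    from b[OF x] have xa: "x > a" and h1: "norm (\<psi> x) \<le> 1" and h2: "norm (G x) \<le> M" by auto
    have "norm (p2 x) = norm (G x) * norm (\<psi> x)" by (simp add: ep[OF xa] norm_mult)
    also have "\<dots> \<le> M * 1" using h1 h2 by (intro mult_mono) (auto intro: order_trans[OF norm_ge_zero])
    finally show "norm (p2 x) \<le> M" by simp
  qed
  have p1lim: "(p1 \<longlongrightarrow> 0) at_top" by (rule deriv_tendsto_zero[OF h1 h2 h3 lt])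
  obtain C where W: "\<And>x. x > a \<Longrightarrow> \<psi> x * S.ur1 x - p1 x * S.ur x = C"
    using wronskian_const[of a \<psi> p1 p2 S.ur S.ur1 S.ur2 G, OF der der1 urd ur1d ep ure] by blast
  have Wlim: "((\<lambda>x. \<psi> x * S.ur1 x - p1 x * S.ur x) \<longlongrightarrow> 0) at_top"
    using tendsto_diff[OF tendsto_zero_bdd[OF lt S.ur1_bdd] tendsto_zero_bdd[OF p1lim S.ur_bdd]] by simp
  have C0: "C = 0"
  proof -
    have "\<forall>\<^sub>F x in at_top. \<psi> x * S.ur1 x - p1 x * S.ur x = C"
      using ev3 by eventually_elim (simp add: W)
    from Lim_transform_eventually[OF Wlim this] have "((\<lambda>x::real. C) \<longlongrightarrow> 0) at_top" .
    then show ?thesis by (simp add: tendsto_const_iff)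
  qed
  obtain x1 where x1: "x1 > a" "S.ur x1 \<noteq> 0"
    using eventually_conj[OF ev3 S.ur_nz] by (auto simp: eventually_at_top_linorder)
  define c where "c = \<psi> x1 / S.ur x1"
  have psi_eq: "\<psi> x = c * S.ur x" if x: "x > a" for x
  proof -
    have q1: "((\<lambda>x. \<psi> x - c * S.ur x) has_vector_derivative p1 x - c * S.ur1 x) (at x)" if x: "x > a" for x
      by (intro has_vector_derivative_diff has_vector_derivative_mult_right der x urd)
    have q2: "((\<lambda>x. p1 x - c * S.ur1 x) has_vector_derivative p2 x - c * S.ur2 x) (at x)" if x: "x > a" for x
      by (intro has_vector_derivative_diff has_vector_derivative_mult_right der1 x ur1d)
    have q3: "p2 x - c * S.ur2 x = G x * (\<psi> x - c * S.ur x)" if x: "x > a" for x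
      using ep[OF x] ure[OF x] by (simp add: algebra_simps)
    have q4: "continuous_on {a<..} G" using S.pot_cont[of E] Sa unfolding G_def by simp
    have q5: "\<psi> x1 - c * S.ur x1 = 0" using x1 by (simp add: c_def)
    have "\<psi> x1 * S.ur1 x1 = p1 x1 * S.ur x1" using W[OF x1(1)] C0 by simp
    then have q6: "p1 x1 - c * S.ur1 x1 = 0" using x1 by (simp add: c_def field_simps)
    have "\<psi> x - c * S.ur x = 0"
      by (rule ode_unique[where w="\<lambda>x. \<psi> x - c * S.ur x", OF q1 q2 q3 q4 x1(1) q5 q6 x])
    then show ?thesis by simp
  qed
  have c0: "c \<noteq> 0" using nz psi_eq by force
  have Eneg: "E < 0"
  proof (rule ccontr)
    assume "\<not> E < 0"
    then have Rk: "Re k = 0" by (simp add: k_def)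
    have A: "((\<lambda>x. norm (\<psi> x)) \<longlongrightarrow> 0) at_top" using tendsto_norm[OF lt] by simp
    have B: "((\<lambda>x. norm c * norm (S.ur x)) \<longlongrightarrow> norm c * 1) at_top"
      by (intro tendsto_mult tendsto_const S.ur_norm_imag[OF Rk])
    have "\<forall>\<^sub>F x in at_top. norm c * norm (S.ur x) = norm (\<psi> x)"
      using ev3 by eventually_elim (simp add: psi_eq norm_mult)
    from Lim_transform_eventually[OF B this] have "((\<lambda>x. norm (\<psi> x)) \<longlongrightarrow> norm c) at_top" by simp
    then have "norm c = 0" using A by (metis tendsto_unique trivial_limit_at_top_linorder)
    then show False using c0 by simp
  qed
  define s where "s = sqrt (-2*E)"
  have ks: "k = of_real s" using Eneg by (simp add: k_def s_def)
  have sp: "s > 0" using Eneg by (simp add: s_def)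
  have cp: "convergent_prod (pc S.lam S.g)" and fl: "fc S.lam S.g \<longlonglongrightarrow> prodinf (pc S.lam S.g)"
    using fc_prod[OF S.g_Re less_imp_le[OF S.lam_pos]] by auto
  have ura: "(S.ur \<longlongrightarrow> prodinf (pc S.lam S.g)) (at_right a)" using S.ur_at_a[OF fl] Sa by simp
  have L1: "((\<lambda>x. c * S.ur x) \<longlongrightarrow> c * prodinf (pc S.lam S.g)) (at_right a)" by (intro tendsto_mult tendsto_const ura)
  have "\<forall>\<^sub>F x in at_right a. \<psi> x = c * S.ur x"
    using eventually_at_right_less[of a] by eventually_elim (simp add: psi_eq)
  from Lim_transform_eventually[OF la this] have L2: "((\<lambda>x. c * S.ur x) \<longlongrightarrow> 0) (at_right a)" .
  have "c * prodinf (pc S.lam S.g) = 0" using tendsto_unique[OF _ L1 L2] by simp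
  then have P0: "prodinf (pc S.lam S.g) = 0" using c0 by simp
  obtain n where pz: "pc S.lam S.g n = 0" using prodinf_nonzero[OF cp] P0 by blast
  have sform: "s = \<mu>/(q*\<delta>*(1+real n)) - (real n+1)*\<delta>/2" by (rule S.pc_zero_s[OF ks pz])
  have N: "1 + real n > 0" by simp
  show ?thesis
  proof (intro exI conjI)
    have "\<mu>/(q*\<delta>*(1+real n)) - (1+real n)*\<delta>/2 > 0" using sp sform by (simp add: add.commute)
    then have "(\<delta>*(1+real n))^2 < 2*\<mu>/q" by (rule aux4[OF d q N])
    then have "\<delta>*(1+real n) < sqrt (2*\<mu>/q)" by (rule real_less_rsqrt)
    then have "1 + real n < (1/\<delta>) * sqrt (2*\<mu>/q)" using d by (simp add: field_simps)
    then show "real n < -1 + (1/\<delta>) * sqrt (2*\<mu>/q)" by simp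
    have "s^2 = -2*E" using Eneg by (simp add: s_def)
    moreover have "energy \<mu> \<delta> q n = - (1/2) * s^2"
      unfolding energy_def sform by (simp add: algebra_simps)
    ultimately show "E = energy \<mu> \<delta> q n" by simp
    show "c * exp (k * of_real a) \<noteq> 0" using c0 by simp
    show "\<forall>x > ln q / \<delta>. \<psi> x = (c * exp (k * of_real a)) * of_real (eigfun \<mu> \<delta> q n x)"
    proof (intro allI impI)
      fix x assume "x > ln q / \<delta>"
      then have x: "x > a" by (simp add: a_def)
      have "S.ur x = exp (k * of_real S.a) * of_real (eigfun \<mu> \<delta> q n x)"
        by (rule S.ur_eig[OF ks pz]) (use x Sa in simp)
      then show "\<psi> x = (c * exp (k * of_real a)) * of_real (eigfun \<mu> \<delta> q n x)"
        using psi_eq[OF x] Sa by simp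
    qed
  qed
qed

lemma backward:
  fixes \<mu> \<delta> q E :: real and \<psi> :: "real \<Rightarrow> complex" and n :: nat and c :: complex
  assumes mu: "\<mu> > 0" and d: "\<delta> > 0" and q: "q > 0"
    and nb: "real n < -1 + (1/\<delta>) * sqrt (2 * \<mu> / q)"
    and En: "E = energy \<mu> \<delta> q n" and c0: "c \<noteq> 0"
    and pe: "\<forall>x > ln q / \<delta>. \<psi> x = c * of_real (eigfun \<mu> \<delta> q n x)"
  shows "bound_state \<mu> \<delta> q E \<psi>"
proof -
  define a where "a = ln q / \<delta>"
  define s where "s = \<mu>/(q*\<delta>*(1+real n)) - (real n+1)*\<delta>/2"
  have N: "1 + real n > 0" by simp
  have sp: "s > 0"
  proof -
    have "1 + real n < (1/\<delta>) * sqrt (2*\<mu>/q)" using nb by simp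
    then have l: "\<delta>*(1+real n) < sqrt (2*\<mu>/q)" using d by (simp add: field_simps)
    have "(\<delta>*(1+real n))^2 < (sqrt (2*\<mu>/q))^2"
      using l d by (intro power_strict_mono) auto
    also have "\<dots> = 2*\<mu>/q" using mu q by simp
    finally have "\<mu>/(q*\<delta>*(1+real n)) - (1+real n)*\<delta>/2 > 0" by (rule aux5[OF d q N])
    then show ?thesis unfolding s_def by (simp add: add.commute)
  qed
  define k where "k = complex_of_real s"
  have Es: "E = - (1/2) * s^2" unfolding En energy_def s_def by (simp add: algebra_simps)
  have kE: "k^2 = complex_of_real (-2*E)" unfolding k_def Es by simp
  have kRe: "Re k \<ge> 0" using sp by (simp add: k_def)
  interpret S: sol \<mu> \<delta> q k using mu d q kRe by unfold_locales auto
  have Sa: "S.a = a" by (simp add: S.a_def a_def)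
  have pz: "pc S.lam S.g n = 0"
  proof -
    have gs: "S.g = of_real (1 + 2 * s / \<delta>)"
    proof -
      have "S.g = 1 + 2 * k / of_real \<delta>" by (simp add: S.g_def)
      also have "\<dots> = of_real (1 + 2 * s / \<delta>)" using d by (simp add: k_def)
      finally show ?thesis .
    qed
    have "2 * s / \<delta> = 2 * \<mu> / (q * \<delta>\<^sup>2 * (real n + 1)) - (real n + 1)"
      unfolding s_def using aux2[OF d q, of "real n + 1" \<mu>] by (simp add: add.commute)
    then have "(1 + 2 * s / \<delta> + real n) * (real n + 1) = 2 * \<mu> / (q * \<delta>\<^sup>2 * (real n + 1)) * (real n + 1)"
      by simp
    also have "\<dots> = S.lam" unfolding S.lam_def using aux3[OF d q, of "real n + 1" \<mu>] by simp
    finally have r: "(1 + 2 * s / \<delta> + real n) * (real n + 1) = S.lam" .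
    have "(S.g + of_nat n) * (of_nat n + 1) = of_real ((1 + 2 * s / \<delta> + real n) * (real n + 1))"
      unfolding gs by simp
    also have "\<dots> = of_real S.lam" by (simp only: r)
    finally have e: "(S.g + of_nat n) * (of_nat n + 1) = of_real S.lam" .
    show ?thesis unfolding pc_def e using S.lam_pos by simp
  qed
  define c' where "c' = c * exp (- k * of_real a)"
  have c'0: "c' \<noteq> 0" using c0 by (simp add: c'_def)
  have psi_eq: "\<psi> x = c' * S.ur x" if x: "x > a" for x
  proof -
    have "S.ur x = exp (k * of_real S.a) * of_real (eigfun \<mu> \<delta> q n x)"
      by (rule S.ur_eig[OF k_def pz]) (use x Sa in simp)
    then have "of_real (eigfun \<mu> \<delta> q n x) = exp (- k * of_real a) * S.ur x"
      using Sa by (simp add: exp_minus field_simps)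
    then show ?thesis using pe x by (simp add: a_def c'_def)
  qed
  have urd: "\<And>x. x > a \<Longrightarrow> (S.ur has_vector_derivative S.ur1 x) (at x)" using S.ur_deriv Sa by simp
  have ur1d: "\<And>x. x > a \<Longrightarrow> (S.ur1 has_vector_derivative S.ur2 x) (at x)" using S.ur1_deriv Sa by simp
  have ure: "\<And>x. x > a \<Longrightarrow> S.ur2 x = complex_of_real (2 * (pot \<mu> \<delta> q x - E)) * S.ur x"
    using S.ur_ode[OF kE] Sa by simp
  have dpsi: "(\<psi> has_vector_derivative c' * S.ur1 x) (at x)" if x: "x > a" for x
  proof (rule has_vector_derivative_transform_within_open[OF has_vector_derivative_mult_right[OF urd[OF x]]])
    show "open {a<..}" by simp
    show "x \<in> {a<..}" using x by simp
    fix y assume "y \<in> {a<..}" then show "c' * S.ur y = \<psi> y" using psi_eq by simp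
  qed
  have ev3: "\<forall>\<^sub>F x in at_top. x > a" by (rule eventually_gt_at_top)
  have cont: "continuous_on {a<..} \<psi>"
    by (rule continuous_at_imp_continuous_on) (auto intro: has_vector_derivative_continuous dpsi)
  have P1: "\<forall>x>a. (\<psi> has_vector_derivative c' * S.ur1 x) (at x) \<and>
      ((\<lambda>x. c' * S.ur1 x) has_vector_derivative c' * S.ur2 x) (at x) \<and>
      - (1/2) * (c' * S.ur2 x) + of_real (pot \<mu> \<delta> q x) * \<psi> x = of_real E * \<psi> x"
  proof (intro allI impI conjI)
    fix x assume x: "x > a"
    show "(\<psi> has_vector_derivative c' * S.ur1 x) (at x)" by (rule dpsi[OF x])
    show "((\<lambda>x. c' * S.ur1 x) has_vector_derivative c' * S.ur2 x) (at x)"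
      by (rule has_vector_derivative_mult_right[OF ur1d[OF x]])
    show "- (1/2) * (c' * S.ur2 x) + of_real (pot \<mu> \<delta> q x) * \<psi> x = of_real E * \<psi> x"
      unfolding ure[OF x] psi_eq[OF x] by (simp add: algebra_simps)
  qed
  have P2: "(\<psi> \<longlongrightarrow> 0) (at_right a)"
  proof -
    have "(S.ur \<longlongrightarrow> 0) (at_right a)" using S.ur_at_a[OF fc_lim0[OF pz]] Sa by simp
    then have L: "((\<lambda>x. c' * S.ur x) \<longlongrightarrow> c' * 0) (at_right a)" by (intro tendsto_mult tendsto_const)
    have "\<forall>\<^sub>F x in at_right a. c' * S.ur x = \<psi> x"
      using eventually_at_right_less[of a] by eventually_elim (simp add: psi_eq)
    from Lim_transform_eventually[OF L this] show "(\<psi> \<longlongrightarrow> 0) (at_right a)" by simp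
  qed
  have P3: "(\<psi> \<longlongrightarrow> 0) at_top"
  proof -
    have "(S.ur \<longlongrightarrow> 0) at_top" by (rule S.ur_lim_pos) (use sp in \<open>simp add: k_def\<close>)
    then have L: "((\<lambda>x. c' * S.ur x) \<longlongrightarrow> c' * 0) at_top" by (intro tendsto_mult tendsto_const)
    have "\<forall>\<^sub>F x in at_top. c' * S.ur x = \<psi> x"
      using ev3 by eventually_elim (simp add: psi_eq)
    from Lim_transform_eventually[OF L this] show "(\<psi> \<longlongrightarrow> 0) at_top" by simp
  qed
  have P4: "(\<lambda>x. (cmod (\<psi> x))\<^sup>2) integrable_on {a<..}"
  proof -
    define B where "B = exp (s * S.a) * (\<Sum>m\<le>n. norm (fc S.lam S.g m))"
    show ?thesis
    proof (rule integrable_exp_bound[OF cont sp])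
      fix x assume x: "x > a"
      have "norm (\<psi> x) = norm c' * norm (S.ur x)" by (simp add: psi_eq[OF x] norm_mult)
      also have "\<dots> \<le> norm c' * (B * exp (- s * x))"
        unfolding B_def by (intro mult_left_mono S.ur_bound[OF k_def pz]) (use x Sa in auto)
      finally show "norm (\<psi> x) \<le> (norm c' * B) * exp (- s * x)" by simp
    qed
  qed
  have P5: "\<exists>x>a. \<psi> x \<noteq> 0"
  proof -
    obtain x1 where x1: "x1 > a" "S.ur x1 \<noteq> 0"
      using eventually_conj[OF ev3 S.ur_nz] by (auto simp: eventually_at_top_linorder)
    show ?thesis using x1 psi_eq[OF x1(1)] c'0 by auto
  qed
  show ?thesis
    unfolding bound_state_def Let_def a_def[symmetric]
    apply (intro conjI P2 P3 P4 P5)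
    apply (rule exI[of _ "\<lambda>x. c' * S.ur1 x"], rule exI[of _ "\<lambda>x. c' * S.ur2 x"])
    using P1 by simp
qed

theorem mainTheorem1:
  fixes \<mu> \<delta> q E :: real and \<psi> :: "real \<Rightarrow> complex"
  assumes "\<mu> > 0" and "\<delta> > 0" and "q > 0"
  shows "bound_state \<mu> \<delta> q E \<psi> \<longleftrightarrow>
     (\<exists>n::nat. \<exists>c::complex.
        real n < -1 + (1/\<delta>) * sqrt (2 * \<mu> / q) \<and>
        E = energy \<mu> \<delta> q n \<and> c \<noteq> 0 \<and>
        (\<forall>x > ln q / \<delta>. \<psi> x = c * of_real (eigfun \<mu> \<delta> q n x)))"
  using forward[OF assms] backward[OF assms] by blast

end
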